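(* Let $\{(N_n,B_n)\}_{n=1}^\infty$ be a sequence with $N_n>0$ and $B_n\subseteq\mathbb{R}$ finite with $\#B_n\ge 2$ for all $n\ge1$. For each $n$ let $B_{n,1}=B_n\cap\{0,1,\dots,N_n-1\}$ and $B_{n,2}=B_n\setminus B_{n,1}$. (1) If either $\sum_{n=1}^{\infty}\frac{\#B_{n,2}}{\#B_n}<\infty$, or $\sum_{n=1}^{\infty}\frac{\max\{|b|:b\in B_n\}}{N_1N_2\cdots N_n}<\infty$, then the infinite convolution $$\mu=\delta_{N_1^{-1}B_1}*\delta_{(N_2N_1)^{-1}B_2}*\cdots*\delta_{(N_n\cdots N_2N_1)^{-1}B_n}*\cdots$$ exists. (2) If there exists $r_0>0$ such that $$\sum_{n=1}^{\infty}\frac{\#\{b\in B_n:\ |b|>N_1N_2\cdots N_n r_0\}}{\#B_n}=\infty,$$ then the infinite convolution $\mu$ does not exist.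
   Context: For a finite set $A\subseteq\mathbb{R}$, $\delta_A=\frac{1}{\#A}\sum_{a\in A}\delta_a$, where $\delta_a$ is the Dirac measure at $a$; $*$ denotes convolution of measures and $cA=\{ca:a\in A\}$. Set $\mu_n=\delta_{N_1^{-1}B_1}*\delta_{(N_2N_1)^{-1}B_2}*\cdots*\delta_{(N_n\cdots N_1)^{-1}B_n}$. The infinite convolution is said to exist if $\{\mu_n\}$ converges weakly to a Borel probability measure $\mu$, which is then the infinite convolution. *)

theory Defs
  imports "HOL-Probability.Probability" "HOL-Probability.Convolution"
begin

definition delta_set :: "real set \<Rightarrow> real measure" where
  "delta_set A = distr (uniform_count_measure A) borel (\<lambda>x. x)"

definition prodN :: "(nat \<Rightarrow> nat) \<Rightarrow> nat \<Rightarrow> real" where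
  "prodN N n = (\<Prod>k\<in>{1..n}. real (N k))"

definition Bn1 :: "(nat \<Rightarrow> nat) \<Rightarrow> (nat \<Rightarrow> real set) \<Rightarrow> nat \<Rightarrow> real set" where
  "Bn1 N B n = B n \<inter> real ` {0..<N n}"

definition Bn2 :: "(nat \<Rightarrow> nat) \<Rightarrow> (nat \<Rightarrow> real set) \<Rightarrow> nat \<Rightarrow> real set" where
  "Bn2 N B n = B n - Bn1 N B n"

primrec mu_seq :: "(nat \<Rightarrow> nat) \<Rightarrow> (nat \<Rightarrow> real set) \<Rightarrow> nat \<Rightarrow> real measure" where
  "mu_seq N B 0 = return borel 0"
| "mu_seq N B (Suc n) =
     convolution (mu_seq N B n) (delta_set ((\<lambda>b. b / prodN N (Suc n)) ` B (Suc n)))"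

definition inf_conv_exists :: "(nat \<Rightarrow> nat) \<Rightarrow> (nat \<Rightarrow> real set) \<Rightarrow> bool" where
  "inf_conv_exists N B \<longleftrightarrow> (\<exists>\<mu>. real_distribution \<mu> \<and> weak_conv_m (mu_seq N B) \<mu>)"

end

theory Submission
  imports Defs
begin


lemma real_distribution_conv:
  assumes "real_distribution M" "real_distribution N"
  shows "real_distribution (M \<star> N)"
proof -
  interpret M: real_distribution M by fact
  interpret N: real_distribution N by fact
  interpret P: pair_prob_space M N ..
  show ?thesis unfolding convolution_def
    by (rule P.real_distribution_distr) simp
qed

lemma char_conv:
  assumes "real_distribution M" "real_distribution N"
  shows "char (M \<star> N) t = char M t * char N t"
proof -
  interpret M: real_distribution M by fact
  interpret N: real_distribution N by fact
  interpret P: pair_prob_space M N ..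
  have int: "integrable (M \<Otimes>\<^sub>M N) (\<lambda>(x, y). iexp (t * x) * iexp (t * y))"
    by (rule P.integrable_const_bound[where B=1]) (auto simp: norm_mult)
  have "char (M \<star> N) t = (CLINT z | M \<Otimes>\<^sub>M N. iexp (t * (fst z + snd z)))"
    unfolding char_def convolution_def
    by (subst integral_distr) (auto simp: case_prod_beta)
  also have "\<dots> = (CLINT z | M \<Otimes>\<^sub>M N. (\<lambda>(x, y). iexp (t * x) * iexp (t * y)) z)"
    by (intro Bochner_Integration.integral_cong) (auto simp: distrib_left exp_add algebra_simps)
  also have "\<dots> = (CLINT x | M. (CLINT y | N. iexp (t * x) * iexp (t * y)))"
    using P.integral_fst[OF int] by simp
  also have "\<dots> = (CLINT x | M. iexp (t * x) * char N t)"
    unfolding char_def by simp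
  also have "\<dots> = char M t * char N t"
    unfolding char_def by simp
  finally show ?thesis .
qed

lemma delta_set_real_distribution:
  assumes "finite A" "A \<noteq> {}"
  shows "real_distribution (delta_set A)"
proof -
  interpret U: prob_space "uniform_count_measure A"
    using prob_space_uniform_count_measure[OF assms] .
  show ?thesis unfolding delta_set_def
    by (rule U.real_distribution_distr) simp
qed

lemma char_delta_set:
  assumes "finite A"
  shows "char (delta_set A) t = (\<Sum>a\<in>A. iexp (t * a)) / card A"
  unfolding char_def delta_set_def
proof -
  have "(CLINT x | uniform_count_measure A. iexp (t * x)) = (\<Sum>a\<in>A. (1 / card A) *\<^sub>R iexp (t * a))"
    using assms by (simp add: uniform_count_measure_def lebesgue_integral_point_measure_finite)
  also have "\<dots> = (\<Sum>a\<in>A. iexp (t * a)) / card A"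
    by (simp add: sum_divide_distrib scaleR_conv_of_real)
  finally show "(CLINT x | distr (uniform_count_measure A) borel (\<lambda>x. x). iexp (t * x)) = (\<Sum>a\<in>A. iexp (t * a)) / card A"
    by (subst integral_distr) auto
qed

lemma measure_delta_set:
  assumes "finite A" "S \<in> sets borel"
  shows "measure (delta_set A) S = card (A \<inter> S) / card A"
proof -
  have "measure (distr (uniform_count_measure A) borel (\<lambda>x. x)) S = measure (uniform_count_measure A) (A \<inter> S)"
    using assms by (subst measure_distr) (auto simp: Int_commute space_uniform_count_measure)
  also have "\<dots> = card (A \<inter> S) / card A"
    using assms by (subst measure_uniform_count_measure) auto
  finally show ?thesis unfolding delta_set_def .
qed



lemma levy_bound:
  assumes "real_distribution M" "u > 0"
  shows "u * measure M {x. abs x \<ge> 2 / u} \<le> Re (CLBINT t:{-u..u}. 1 - char M t)"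
proof -
  interpret Mn: real_distribution M by fact
  have *: "\<And>u x. u > 0 \<Longrightarrow> x \<noteq> 0 \<Longrightarrow> (CLBINT t:{-u..u}. 1 - iexp (t * x)) =
      2 * (u  - sin (u * x) / x)"
  proof -
    fix u :: real and x :: real
    assume "u > 0" and "x \<noteq> 0"
    hence "(CLBINT t:{-u..u}. 1 - iexp (t * x)) = (CLBINT t=-u..u. 1 - iexp (t * x))"
      by (subst interval_integral_Icc, auto)
    also have "\<dots> = (CLBINT t=-u..ereal 0. 1 - iexp (t * x)) + (CLBINT t= ereal 0..u. 1 - iexp (t * x))"
      using \<open>u > 0\<close>
      by (subst interval_integral_sum; force simp add: interval_integrable_isCont)
    also have "\<dots> = (CLBINT t=ereal 0..u. 1 - iexp (t * -x)) + (CLBINT t=ereal 0..u. 1 - iexp (t * x))"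
      by (subst interval_integral_reflect, auto)
    also have "... = CLBINT xa=ereal 0..ereal u. 1 - iexp (xa * - x) + (1 - iexp (xa * x))"
      by (subst interval_lebesgue_integral_add (2) [symmetric]) (auto simp: interval_integrable_isCont)
    also have "\<dots> = (LBINT t=ereal 0..u. 2 - 2 * cos (t * x))"
      unfolding exp_Euler cos_of_real by (simp flip: interval_lebesgue_integral_of_real)
    also have "\<dots> = 2 * u - 2 * sin (u * x) / x"
      by (subst interval_lebesgue_integral_diff)
         (auto intro!: interval_integrable_isCont
               simp: interval_lebesgue_integral_of_real integral_cos [OF \<open>x \<noteq> 0\<close>] mult.commute[of _ x])
    finally show "(CLBINT t:{-u..u}. 1 - iexp (t * x)) = 2 * (u  - sin (u * x) / x)"
      by (simp add: field_simps)
  qed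
  interpret P: pair_sigma_finite "M" lborel ..
  have Mn1 [simp]: "measure (M) UNIV = 1" by (metis Mn.prob_space Mn.space_eq_univ)
  have Mn2 [simp]: "\<And>x. complex_integrable (M) (\<lambda>t. exp (\<i> * complex_of_real (x * t)))"
    by (rule Mn.integrable_const_bound [where B = 1], auto)
  have Mn3: "set_integrable (M \<Otimes>\<^sub>M lborel) (UNIV \<times> {- u..u}) (\<lambda>a. 1 - exp (\<i> * complex_of_real (snd a * fst a)))"
    using \<open>0 < u\<close>
    unfolding set_integrable_def
    by (intro integrableI_bounded_set_indicator [where B="2"])
       (auto simp: lborel.emeasure_pair_measure_Times ennreal_mult_less_top not_less top_unique
             split: split_indicator
             intro!: order_trans [OF norm_triangle_ineq4])
  have "(CLBINT t:{-u..u}. 1 - char (M) t) =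
      (CLBINT t:{-u..u}. (CLINT x | M. 1 - iexp (t * x)))"
    unfolding char_def by (rule set_lebesgue_integral_cong, auto simp del: of_real_mult)
  also have "\<dots> = (CLBINT t. (CLINT x | M. indicator {-u..u} t *\<^sub>R (1 - iexp (t * x))))"
    unfolding set_lebesgue_integral_def
    by (rule Bochner_Integration.integral_cong) (auto split: split_indicator)
  also have "\<dots> = (CLINT x | M. (CLBINT t:{-u..u}. 1 - iexp (t * x)))"
    using Mn3 by (subst P.Fubini_integral) (auto simp: indicator_times split_beta' set_integrable_def set_lebesgue_integral_def)
  also have "\<dots> = (CLINT x | M. (if x = 0 then 0 else 2 * (u  - sin (u * x) / x)))"
    using \<open>u > 0\<close> by (intro Bochner_Integration.integral_cong, auto simp add: * simp del: of_real_mult)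
  also have "\<dots> = (LINT x | M. (if x = 0 then 0 else 2 * (u  - sin (u * x) / x)))"
    by (rule integral_complex_of_real)
  finally have "Re (CLBINT t:{-u..u}. 1 - char (M) t) =
     (LINT x | M. (if x = 0 then 0 else 2 * (u  - sin (u * x) / x)))" by simp
  also have "\<dots> \<ge> (LINT x : {x. abs x \<ge> 2 / u} | M. u)"
  proof -
    have "complex_integrable (M) (\<lambda>x. CLBINT t:{-u..u}. 1 - iexp (snd (x, t) * fst (x, t)))"
      using Mn3 unfolding set_integrable_def set_lebesgue_integral_def
      by (intro P.integrable_fst) (simp add: indicator_times split_beta')
    hence "complex_integrable (M) (\<lambda>x. if x = 0 then 0 else 2 * (u  - sin (u * x) / x))"
      using \<open>u > 0\<close>
      unfolding set_integrable_def
      by (subst Bochner_Integration.integrable_cong) (auto simp add: * simp del: of_real_mult)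
    hence **: "integrable (M) (\<lambda>x. if x = 0 then 0 else 2 * (u  - sin (u * x) / x))"
      unfolding complex_of_real_integrable_eq .
    have "2 * sin x \<le> x" if "2 \<le> x" for x :: real
      by (rule order_trans[OF _ \<open>2 \<le> x\<close>]) auto
    moreover have "x \<le> 2 * sin x" if "x \<le> - 2" for x :: real
      by (rule order_trans[OF \<open>x \<le> - 2\<close>]) auto
    moreover have "x < 0 \<Longrightarrow> x \<le> sin x" for x :: real
      using sin_x_le_x[of "-x"] by simp
    ultimately show ?thesis
      using \<open>u > 0\<close> unfolding set_lebesgue_integral_def
      by (intro integral_mono [OF _ **])
         (auto simp: divide_simps sin_x_le_x mult.commute[of u] mult_neg_pos top_unique less_top[symmetric]
               split: split_indicator)
  qed
  also (xtrans) have "(LINT x : {x. abs x \<ge> 2 / u} | M. u) = u * measure (M) {x. abs x \<ge> 2 / u}"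
    unfolding set_lebesgue_integral_def
    by (simp add: Mn.emeasure_eq_measure)
  finally show "u * measure M {x. abs x \<ge> 2 / u} \<le> Re (CLBINT t:{-u..u}. 1 - char M t)" .
qed

lemma tail_bound_char:
  assumes "real_distribution M" "u > 0" "\<And>t. \<bar>t\<bar> \<le> u \<Longrightarrow> cmod (1 - char M t) \<le> e"
  shows "measure M {x. abs x \<ge> 2 / u} \<le> 2 * e"
proof -
  interpret M': real_distribution M by fact
  have 3: "integrable lborel (\<lambda>x. indicat_real {-u..u} x *\<^sub>R cmod (1 - char M x))"
    by (intro borel_integrable_compact[OF compact_Icc] continuous_at_imp_continuous_on
              continuous_intros ballI M'.isCont_char continuous_intros)
  have "u * measure M {x. abs x \<ge> 2 / u} \<le> Re (CLBINT t:{-u..u}. 1 - char M t)"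
    by (rule levy_bound) fact+
  also have "\<dots> \<le> cmod (CLBINT t:{-u..u}. 1 - char M t)"
    by (rule complex_Re_le_cmod)
  also have "\<dots> \<le> (LBINT t:{-u..u}. cmod (1 - char M t))"
    unfolding set_lebesgue_integral_def
    using integral_norm_bound[of _ "\<lambda>x. indicator {u..v} x *\<^sub>R (1 - char M x)" for u v] by simp
  also have "\<dots> \<le> (LBINT t:{-u..u}. e)"
    unfolding set_lebesgue_integral_def
  proof (rule integral_mono [OF 3])
    show "indicat_real {- u..u} x *\<^sub>R cmod (1 - char M x)
       \<le> indicat_real {- u..u} x *\<^sub>R e" if "x \<in> space lborel" for x
      using assms(3)[of x] by (auto simp: indicator_def)
  qed (simp add: emeasure_lborel_Icc_eq)
  also have "\<dots> = 2 * u * e"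
    using \<open>u > 0\<close> unfolding set_lebesgue_integral_def by simp
  finally show ?thesis using \<open>u > 0\<close> by (simp add: mult.assoc)
qed



lemma real_distribution_return0: "real_distribution (return borel (0::real))"
  unfolding real_distribution_def real_distribution_axioms_def
  by (auto intro!: prob_space_return)

lemma char_return0: "char (return borel (0::real)) t = 1"
  unfolding char_def by (simp add: integral_return)

locale conv_seq =
  fixes D :: "nat \<Rightarrow> real measure" and mu :: "nat \<Rightarrow> real measure"
  assumes D: "\<And>k. real_distribution (D k)"
    and mu0: "mu 0 = return borel 0" and muS: "\<And>n. mu (Suc n) = convolution (mu n) (D n)"
begin

lemma mu_rd: "real_distribution (mu n)"
  by (induction n) (auto simp: mu0 muS real_distribution_return0 real_distribution_conv D)

lemma char_mu: "char (mu n) t = (\<Prod>k<n. char (D k) t)"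
  by (induction n) (auto simp: mu0 muS char_return0 char_conv D mu_rd)

lemma char_D_le1: "cmod (char (D k) t) \<le> 1"
  using real_distribution.cmod_char_le_1[OF D] .

lemma char_mu_le1: "cmod (char (mu k) t) \<le> 1"
  using real_distribution.cmod_char_le_1[OF mu_rd] .

lemma step_diff: "cmod (char (mu (Suc n)) t - char (mu n) t) \<le> cmod (1 - char (D n) t)"
proof -
  have "char (mu (Suc n)) t - char (mu n) t = - (char (mu n) t * (1 - char (D n) t))"
    by (simp add: muS char_conv mu_rd D algebra_simps)
  hence "cmod (char (mu (Suc n)) t - char (mu n) t) = cmod (char (mu n) t) * cmod (1 - char (D n) t)"
    by (simp add: norm_mult)
  also have "\<dots> \<le> 1 * cmod (1 - char (D n) t)"
    by (intro mult_right_mono char_mu_le1) auto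
  finally show ?thesis by simp
qed

lemma one_minus_char_mu: "cmod (1 - char (mu n) t) \<le> (\<Sum>k<n. cmod (1 - char (D k) t))"
proof (induction n)
  case 0 then show ?case by (simp add: mu0 char_return0)
next
  case (Suc n)
  have "cmod (1 - char (mu (Suc n)) t) \<le> cmod (1 - char (mu n) t) + cmod (char (mu (Suc n)) t - char (mu n) t)"
    using norm_triangle_ineq4[of "1 - char (mu n) t" "char (mu (Suc n)) t - char (mu n) t"] by simp
  also have "\<dots> \<le> (\<Sum>k<n. cmod (1 - char (D k) t)) + cmod (1 - char (D n) t)"
    using Suc step_diff[of n t] by linarith
  finally show ?case by simp
qed

theorem exists_limit:
  assumes H: "\<And>\<epsilon>. \<epsilon> > 0 \<Longrightarrow> \<exists>c e. (\<forall>k. c k \<ge> 0 \<and> e k \<ge> 0) \<and> summable c \<and> summable e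
      \<and> suminf e \<le> \<epsilon> \<and> (\<forall>k t. cmod (1 - char (D k) t) \<le> \<bar>t\<bar> * c k + e k)"
  shows "\<exists>M. real_distribution M \<and> weak_conv_m mu M"
proof -
  have conv: "\<exists>L. (\<lambda>n. char (mu n) t) \<longlonglongrightarrow> L" for t
  proof -
    obtain c e where ce: "\<forall>k. c k \<ge> 0 \<and> e k \<ge> 0" "summable c" "summable e"
       "\<forall>k t. cmod (1 - char (D k) t) \<le> \<bar>t\<bar> * c k + e k"
      using H[of 1] by auto
    define d where "d k = char (mu k) t - char (mu (Suc k)) t" for k
    have sd: "summable d"
    proof (rule summable_comparison_test')
      show "summable (\<lambda>k. \<bar>t\<bar> * c k + e k)"
        using ce by (intro summable_add summable_mult) auto
      show "norm (d k) \<le> \<bar>t\<bar> * c k + e k" for k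
        using step_diff[of k t] ce(4) unfolding d_def by (metis norm_minus_commute order_trans)
    qed
    have "(\<lambda>n. char (mu 0) t - (\<Sum>k<n. d k)) \<longlonglongrightarrow> char (mu 0) t - suminf d"
      by (intro tendsto_intros summable_LIMSEQ sd)
    moreover have "char (mu 0) t - (\<Sum>k<n. d k) = char (mu n) t" for n
      unfolding d_def using sum_lessThan_telescope'[of "\<lambda>k. char (mu k) t" n] by simp
    ultimately show ?thesis by auto
  qed
  then obtain L where L: "\<And>t. (\<lambda>n. char (mu n) t) \<longlonglongrightarrow> L t" by metis
  have tight: "tight mu"
    unfolding tight_def
  proof (intro conjI allI impI mu_rd)
    fix \<epsilon> :: real assume "\<epsilon> > 0"
    then obtain c e where ce: "\<forall>k. c k \<ge> 0 \<and> e k \<ge> 0" "summable c" "summable e" "suminf e \<le> \<epsilon>/8"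
       "\<forall>k t. cmod (1 - char (D k) t) \<le> \<bar>t\<bar> * c k + e k"
      using H[of "\<epsilon>/8"] by auto
    define C where "C = suminf c"
    have C0: "C \<ge> 0" unfolding C_def using ce by (auto intro!: suminf_nonneg)
    define u where "u = (\<epsilon>/8) / (C + 1)"
    have u0: "u > 0" using \<open>\<epsilon> > 0\<close> C0 by (simp add: u_def)
    have uC: "u * C \<le> \<epsilon>/8"
    proof -
      have "u * C \<le> u * (C + 1)" using u0 by simp
      also have "\<dots> = \<epsilon>/8" using C0 by (simp add: u_def field_simps)
      finally show ?thesis .
    qed
    have bnd: "cmod (1 - char (mu n) t) \<le> \<epsilon>/4" if "\<bar>t\<bar> \<le> u" for n t
    proof -
      have "cmod (1 - char (mu n) t) \<le> (\<Sum>k<n. \<bar>t\<bar> * c k + e k)"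
        using one_minus_char_mu[of n t] ce(5) by (meson order_trans sum_mono)
      also have "\<dots> = \<bar>t\<bar> * (\<Sum>k<n. c k) + (\<Sum>k<n. e k)"
        by (simp add: sum.distrib sum_distrib_left)
      also have "\<dots> \<le> \<bar>t\<bar> * C + suminf e"
        using ce unfolding C_def
        by (intro add_mono mult_left_mono sum_le_suminf) auto
      also have "\<dots> \<le> u * C + suminf e"
        using that C0 by (intro add_mono mult_right_mono) auto
      also have "\<dots> \<le> \<epsilon>/4" using uC ce(4) by linarith
      finally show ?thesis .
    qed
    show "\<exists>a b. a < b \<and> (\<forall>n. 1 - \<epsilon> < measure (mu n) {a<..b})"
    proof (intro exI conjI allI)
      show "- (2/u) < 2/u" using u0 by simp
      fix n
      interpret Mn: real_distribution "mu n" by (rule mu_rd)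
      have m: "measure (mu n) {x. abs x \<ge> 2 / u} \<le> 2 * (\<epsilon>/4)"
        by (rule tail_bound_char[OF mu_rd u0 bnd])
      have "UNIV - {x. abs x \<ge> 2 / u} \<subseteq> {- (2/u)<..2/u}" by auto
      hence "measure (mu n) (UNIV - {x. abs x \<ge> 2 / u}) \<le> measure (mu n) {- (2/u)<..2/u}"
        by (intro Mn.finite_measure_mono) auto
      moreover have "measure (mu n) (UNIV - {x. abs x \<ge> 2 / u}) = 1 - measure (mu n) {x. abs x \<ge> 2 / u}"
        using Mn.prob_compl[of "{x. abs x \<ge> 2 / u}"] by simp
      ultimately show "1 - \<epsilon> < measure (mu n) {- (2/u)<..2/u}"
        using m \<open>\<epsilon> > 0\<close> by linarith
    qed
  qed
  have charlim: "char \<nu> = L" if "strict_mono s" "real_distribution \<nu>" "weak_conv_m (mu \<circ> s) \<nu>" for s \<nu>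
  proof
    fix t
    have "(\<lambda>n. char ((mu \<circ> s) n) t) \<longlonglongrightarrow> char \<nu> t"
      by (rule levy_continuity1) (use that mu_rd in \<open>auto simp: comp_def\<close>)
    moreover have "(\<lambda>n. char ((mu \<circ> s) n) t) \<longlonglongrightarrow> L t"
      using LIMSEQ_subseq_LIMSEQ[OF L[of t] that(1)] by (simp add: comp_def)
    ultimately show "char \<nu> t = L t" by (rule LIMSEQ_unique)
  qed
  obtain r M where rM: "strict_mono r" "real_distribution M" "weak_conv_m (mu \<circ> id \<circ> r) M"
    using tight_imp_convergent_subsubsequence[OF tight, of id] by (auto simp: strict_mono_def)
  have cM: "char M = L" using charlim[of r M] rM by simp
  have "weak_conv_m mu M"
  proof (rule tight_subseq_weak_converge[OF mu_rd rM(2) tight])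
    fix s \<nu> assume "strict_mono s" "real_distribution \<nu>" "weak_conv_m (mu \<circ> s) \<nu>"
    moreover have "\<nu> = M"
      using charlim[OF calculation] cM Levy_uniqueness[of \<nu> M] calculation rM(2) by simp
    ultimately show "weak_conv_m (mu \<circ> s) M" by simp
  qed
  then show ?thesis using rM(2) by blast
qed

end



lemma iexp_bound1: "cmod (1 - iexp x) \<le> \<bar>x\<bar>"
  using iexp_approx1[of x 0] by (simp add: norm_minus_commute)

lemma iexp_bound2: "cmod (1 - iexp x) \<le> 2"
proof -
  have "cmod (1 - iexp x) \<le> cmod 1 + cmod (iexp x)" by (rule norm_triangle_ineq4)
  also have "cmod (iexp x) = 1" by (simp add: norm_exp_i_times)
  finally show ?thesis by simp
qed

lemma char_img:
  assumes "finite Bs" "P > 0"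
  shows "char (delta_set ((\<lambda>b. b / P) ` Bs)) t = (\<Sum>b\<in>Bs. iexp (t * (b / P))) / card Bs"
proof -
  have inj: "inj_on (\<lambda>b. b / P) Bs" using assms by (auto simp: inj_on_def)
  have "char (delta_set ((\<lambda>b. b / P) ` Bs)) t = (\<Sum>a\<in>(\<lambda>b. b / P) ` Bs. iexp (t * a)) / card ((\<lambda>b. b / P) ` Bs)"
    using assms by (intro char_delta_set) auto
  also have "\<dots> = (\<Sum>b\<in>Bs. iexp (t * (b / P))) / card Bs"
    using inj by (simp add: sum.reindex card_image)
  finally show ?thesis .
qed

lemma char_img_bound:
  assumes "finite Bs" "Bs \<noteq> {}" "P > 0" "\<And>b. b \<in> Bs \<Longrightarrow> cmod (1 - iexp (t * (b / P))) \<le> g b"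
  shows "cmod (1 - char (delta_set ((\<lambda>b. b / P) ` Bs)) t) \<le> (\<Sum>b\<in>Bs. g b) / card Bs"
proof -
  have c0: "card Bs > 0" using assms by (simp add: card_gt_0_iff)
  have "1 - char (delta_set ((\<lambda>b. b / P) ` Bs)) t = (\<Sum>b\<in>Bs. 1 - iexp (t * (b / P))) / card Bs"
    using c0 by (simp add: char_img assms sum_subtractf field_simps)
  hence "cmod (1 - char (delta_set ((\<lambda>b. b / P) ` Bs)) t) = cmod (\<Sum>b\<in>Bs. 1 - iexp (t * (b / P))) / card Bs"
    by (simp add: norm_divide)
  also have "\<dots> \<le> (\<Sum>b\<in>Bs. g b) / card Bs"
    using c0 by (intro divide_right_mono order_trans[OF norm_sum sum_mono] assms(4)) auto
  finally show ?thesis .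
qed

lemma prodN_pos:
  assumes "\<And>n. n \<ge> 1 \<Longrightarrow> N n > 0"
  shows "prodN N n > 0"
  unfolding prodN_def using assms by (intro prod_pos) auto

lemma prodN_Suc: "prodN N (Suc n) = prodN N n * N (Suc n)"
  unfolding prodN_def by (simp add: prod.nat_ivl_Suc')



lemma part1:
  fixes N :: "nat \<Rightarrow> nat" and B :: "nat \<Rightarrow> real set"
  assumes hN: "\<And>n. n \<ge> 1 \<Longrightarrow> N n > 0"
      and hB: "\<And>n. n \<ge> 1 \<Longrightarrow> finite (B n) \<and> card (B n) \<ge> 2"
      and S: "summable (\<lambda>n. real (card (Bn2 N B (Suc n))) / real (card (B (Suc n))))
          \<or> summable (\<lambda>n. Max (abs ` B (Suc n)) / prodN N (Suc n))"
  shows "inf_conv_exists N B"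
proof -
  define Dk where "Dk k = delta_set ((\<lambda>b. b / prodN N (Suc k)) ` B (Suc k))" for k
  have fin: "finite (B (Suc k))" and c2: "card (B (Suc k)) \<ge> 2" for k
    using hB[of "Suc k"] by auto
  have ne: "B (Suc k) \<noteq> {}" for k using c2[of k] by auto
  have P0: "prodN N k > 0" for k by (rule prodN_pos[OF hN])
  have rd: "real_distribution (Dk k)" for k
    unfolding Dk_def by (rule delta_set_real_distribution) (use fin ne in auto)
  interpret conv_seq Dk "mu_seq N B"
    by (intro conv_seq.intro rd) (simp_all add: Dk_def)
  define q where "q k = real (card (Bn2 N B (Suc k))) / real (card (B (Suc k)))" for k
  define Mx where "Mx k = Max (abs ` B (Suc k))" for k
  have q0: "q k \<ge> 0" for k unfolding q_def by simp
  have Mx0: "Mx k \<ge> 0" for k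
  proof -
    obtain b where "b \<in> B (Suc k)" using ne by blast
    then show ?thesis unfolding Mx_def using fin by (meson Max_ge abs_ge_zero finite_imageI image_eqI order_trans)
  qed
  have bndB: "cmod (1 - char (Dk k) t) \<le> \<bar>t\<bar> * (Mx k / prodN N (Suc k))" for k t
  proof -
    have "cmod (1 - char (Dk k) t) \<le> (\<Sum>b\<in>B (Suc k). \<bar>t\<bar> * (Mx k / prodN N (Suc k))) / card (B (Suc k))"
      unfolding Dk_def
    proof (rule char_img_bound[OF fin ne P0])
      fix b assume b: "b \<in> B (Suc k)"
      have "\<bar>b\<bar> \<le> Mx k" unfolding Mx_def using fin b by auto
      hence "\<bar>t * (b / prodN N (Suc k))\<bar> \<le> \<bar>t\<bar> * (Mx k / prodN N (Suc k))"
        using P0[of "Suc k"] by (simp add: abs_mult divide_right_mono mult_left_mono)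
      then show "cmod (1 - iexp (t * (b / prodN N (Suc k)))) \<le> \<bar>t\<bar> * (Mx k / prodN N (Suc k))"
        using iexp_bound1 order_trans by blast
    qed
    also have "\<dots> = \<bar>t\<bar> * (Mx k / prodN N (Suc k))"
      using c2[of k] by simp
    finally show ?thesis .
  qed
  have bndA: "cmod (1 - char (Dk k) t) \<le> \<bar>t\<bar> * (N (Suc k) / prodN N (Suc k)) + 2 * q k" for k t
  proof -
    define g where "g b = (if b \<in> Bn1 N B (Suc k) then \<bar>t\<bar> * (N (Suc k) / prodN N (Suc k)) else 2)" for b
    have "cmod (1 - char (Dk k) t) \<le> (\<Sum>b\<in>B (Suc k). g b) / card (B (Suc k))"
      unfolding Dk_def
    proof (rule char_img_bound[OF fin ne P0])
      fix b assume b: "b \<in> B (Suc k)"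
      show "cmod (1 - iexp (t * (b / prodN N (Suc k)))) \<le> g b"
      proof (cases "b \<in> Bn1 N B (Suc k)")
        case True
        then obtain m where m: "b = real m" "m < N (Suc k)" unfolding Bn1_def by auto
        have "\<bar>t * (b / prodN N (Suc k))\<bar> = \<bar>t\<bar> * (b / prodN N (Suc k))"
          using m P0[of "Suc k"] by (simp add: abs_mult)
        also have "\<dots> \<le> \<bar>t\<bar> * (N (Suc k) / prodN N (Suc k))"
          using m P0[of "Suc k"] by (intro mult_left_mono divide_right_mono) auto
        finally have "\<bar>t * (b / prodN N (Suc k))\<bar> \<le> \<bar>t\<bar> * (N (Suc k) / prodN N (Suc k))" .
        then show ?thesis using True iexp_bound1[of "t * (b / prodN N (Suc k))"] unfolding g_def by simp
      next
        case False
        then have "g b = 2" unfolding g_def by simp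
        then show ?thesis using iexp_bound2[of "t * (b / prodN N (Suc k))"] by simp
      qed
    qed
    also have "(\<Sum>b\<in>B (Suc k). g b) = card (Bn1 N B (Suc k)) * (\<bar>t\<bar> * (N (Suc k) / prodN N (Suc k)))
         + 2 * card (Bn2 N B (Suc k))"
    proof -
      have "(\<Sum>b\<in>B (Suc k). g b) = (\<Sum>b\<in>Bn1 N B (Suc k). \<bar>t\<bar> * (N (Suc k) / prodN N (Suc k)))
          + (\<Sum>b\<in>Bn2 N B (Suc k). 2)"
      proof -
        have e1: "B (Suc k) \<inter> Bn1 N B (Suc k) = Bn1 N B (Suc k)" by (auto simp: Bn1_def)
        have e2: "B (Suc k) \<inter> - Bn1 N B (Suc k) = Bn2 N B (Suc k)" by (auto simp: Bn2_def)
        show ?thesis unfolding g_def using fin[of k] by (simp only: sum.If_cases Collect_mem_eq e1 e2)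
      qed
      then show ?thesis by simp
    qed
    also have "(card (Bn1 N B (Suc k)) * (\<bar>t\<bar> * (N (Suc k) / prodN N (Suc k)))
         + 2 * card (Bn2 N B (Suc k))) / card (B (Suc k))
       = (card (Bn1 N B (Suc k)) / card (B (Suc k))) * (\<bar>t\<bar> * (N (Suc k) / prodN N (Suc k))) + 2 * q k"
      unfolding q_def by (simp add: add_divide_distrib)
    also have "\<dots> \<le> 1 * (\<bar>t\<bar> * (N (Suc k) / prodN N (Suc k))) + 2 * q k"
    proof -
      have "card (Bn1 N B (Suc k)) \<le> card (B (Suc k))"
        using fin[of k] by (intro card_mono) (auto simp: Bn1_def)
      hence "card (Bn1 N B (Suc k)) / card (B (Suc k)) \<le> (1::real)"
        using c2[of k] by (simp add: divide_le_eq_1)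
      then show ?thesis
        using P0[of "Suc k"] q0[of k] by (intro add_mono mult_right_mono) auto
    qed
    finally show ?thesis by simp
  qed
  have H: "\<exists>c e. (\<forall>k. c k \<ge> 0 \<and> e k \<ge> 0) \<and> summable c \<and> summable e
      \<and> suminf e \<le> \<epsilon> \<and> (\<forall>k t. cmod (1 - char (Dk k) t) \<le> \<bar>t\<bar> * c k + e k)" if "\<epsilon> > 0" for \<epsilon>
    using S
  proof
    assume Sq: "summable (\<lambda>n. real (card (Bn2 N B (Suc n))) / real (card (B (Suc n))))"
    hence Sq': "summable q" unfolding q_def .
    obtain K0 where K0': "\<forall>k\<ge>K0. norm (q k - 0) < 1/2"
      using LIMSEQ_D[OF summable_LIMSEQ_zero[OF Sq'], of "1/2"] by auto
    have K0: "q k < 1/2" if "k \<ge> K0" for k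
      using K0' that q0[of k] by auto
    have N2: "N (Suc k) \<ge> 2" if "k \<ge> K0" for k
    proof (rule ccontr)
      assume "\<not> N (Suc k) \<ge> 2"
      hence N1: "N (Suc k) = 1" using hN[of "Suc k"] by linarith
      have "Bn1 N B (Suc k) \<subseteq> {0}" unfolding Bn1_def N1 by auto
      hence "card (Bn1 N B (Suc k)) \<le> card {0::real}"
        by (intro card_mono) auto
      hence "card (Bn1 N B (Suc k)) \<le> 1" by simp
      moreover have "card (Bn2 N B (Suc k)) = card (B (Suc k)) - card (Bn1 N B (Suc k))"
        unfolding Bn2_def using fin[of k] by (intro card_Diff_subset) (auto simp: Bn1_def)
      ultimately have "real (card (Bn2 N B (Suc k))) \<ge> real (card (B (Suc k))) / 2"
        using c2[of k] by linarith
      hence "q k \<ge> 1/2" unfolding q_def using c2[of k] by (simp add: le_divide_eq)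
      with K0[OF that] show False by simp
    qed
    have sP: "summable (\<lambda>k. 1 / prodN N k)"
    proof (rule summable_ratio_test[where c="1/2" and N=K0])
      fix k assume "k \<ge> K0"
      have "1 / prodN N (Suc k) = (1 / prodN N k) * (1 / N (Suc k))"
        by (simp add: prodN_Suc)
      also have "\<dots> \<le> (1 / prodN N k) * (1/2)"
        using N2[OF \<open>k \<ge> K0\<close>] P0[of k] by (intro mult_left_mono) (auto simp: field_simps)
      finally show "norm (1 / prodN N (Suc k)) \<le> 1/2 * norm (1 / prodN N k)"
        using P0[of k] P0[of "Suc k"] by simp
    qed simp
    have eqNP: "N (Suc k) / prodN N (Suc k) = 1 / prodN N k" for k
      using hN[of "Suc k"] P0[of k] by (simp add: prodN_Suc)
    obtain K where K: "norm (\<Sum>i. q (i + K)) < \<epsilon>/2"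
      using suminf_exist_split[OF _ Sq', of "\<epsilon>/2"] \<open>\<epsilon> > 0\<close> by auto
    define c where "c k = (if k < K then Mx k / prodN N (Suc k) else N (Suc k) / prodN N (Suc k))" for k
    define e where "e k = (if k < K then 0 else 2 * q k)" for k
    have ce0: "\<forall>k. c k \<ge> 0 \<and> e k \<ge> 0"
      unfolding c_def e_def using Mx0 P0 q0 by (auto intro!: divide_nonneg_pos)
    have sc: "summable c"
      by (rule summable_comparison_test'[where N=K and g="\<lambda>k. 1 / prodN N k"])
         (use sP eqNP P0 in \<open>auto simp: c_def less_imp_le\<close>)
    have se: "summable e"
      by (rule summable_comparison_test'[where N=K and g="\<lambda>k. 2 * q k"])
         (use Sq' q0 in \<open>auto simp: e_def\<close>)
    have "suminf e = (\<Sum>n. e (n + K)) + (\<Sum>i<K. e i)"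
      by (rule suminf_split_initial_segment[OF se])
    also have "(\<Sum>i<K. e i) = 0" unfolding e_def by simp
    also have "(\<Sum>n. e (n + K)) = (\<Sum>n. 2 * q (n + K))" unfolding e_def by simp
    also have "\<dots> = 2 * (\<Sum>n. q (n + K))"
      by (rule suminf_mult) (use Sq' summable_ignore_initial_segment in blast)
    finally have "suminf e \<le> \<epsilon>" using K by simp
    moreover have "\<forall>k t. cmod (1 - char (Dk k) t) \<le> \<bar>t\<bar> * c k + e k"
    proof (intro allI)
      fix k t show "cmod (1 - char (Dk k) t) \<le> \<bar>t\<bar> * c k + e k"
        using bndA[of k t] bndB[of k t] by (cases "k < K") (auto simp: c_def e_def)
    qed
    ultimately show ?thesis using ce0 sc se by blast
  next
    assume SM: "summable (\<lambda>n. Max (abs ` B (Suc n)) / prodN N (Suc n))"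
    show ?thesis
    proof (intro exI conjI)
      show "summable (\<lambda>k. Mx k / prodN N (Suc k))" using SM unfolding Mx_def .
      show "\<forall>k. Mx k / prodN N (Suc k) \<ge> 0 \<and> (0::real) \<le> 0" using Mx0 P0 by (auto intro!: divide_nonneg_pos)
      show "\<forall>k t. cmod (1 - char (Dk k) t) \<le> \<bar>t\<bar> * (Mx k / prodN N (Suc k)) + 0"
        using bndB by simp
    qed (use \<open>\<epsilon> > 0\<close> in auto)
  qed
  have mu0': "mu_seq N B 0 = return borel 0" by simp
  show ?thesis unfolding inf_conv_exists_def by (rule exists_limit[OF H])
qed



definition wint :: "real \<Rightarrow> real \<Rightarrow> real" where
  "wint u d = (if d = 0 then 0 else u - sin (u * d) / d)"

lemma wint_has_integral:
  assumes "u \<ge> 0"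
  shows "((\<lambda>t. 1 - cos (t * d)) has_integral wint u d) {0..u}"
proof (cases "d = 0")
  case True then show ?thesis by (simp add: wint_def)
next
  case False
  have "((\<lambda>t. 1 - cos (t * d)) has_integral ((u - sin (u * d) / d) - (0 - sin (0 * d) / d))) {0..u}"
  proof (rule fundamental_theorem_of_calculus[OF assms])
    fix x assume "x \<in> {0..u}"
    have "((\<lambda>t. t - sin (t * d) / d) has_real_derivative (1 - cos (x * d) * d / d)) (at x within {0..u})"
      by (auto intro!: derivative_eq_intros)
    then show "((\<lambda>t. t - sin (t * d) / d) has_vector_derivative (1 - cos (x * d))) (at x within {0..u})"
      using False by (simp add: has_real_derivative_iff_has_vector_derivative)
  qed
  then show ?thesis using False by (simp add: wint_def)
qed

lemma wint_nonneg:
  assumes "u \<ge> 0" shows "wint u d \<ge> 0"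
proof (cases "d = 0")
  case False
  have "\<bar>sin (u * d)\<bar> \<le> \<bar>u * d\<bar>" by (rule abs_sin_x_le_abs_x)
  hence "\<bar>sin (u * d) / d\<bar> \<le> u" using False assms by (simp add: abs_mult divide_le_eq)
  hence "sin (u * d) / d \<le> u" by (rule abs_le_D1)
  then show ?thesis using False by (simp add: wint_def)
qed (simp add: wint_def)

lemma wint_big:
  assumes "u > 0" "\<bar>d\<bar> \<ge> 2 / u" shows "wint u d \<ge> u / 2"
proof -
  have d0: "d \<noteq> 0" using assms by (auto simp: field_simps)
  have "\<bar>sin (u * d) / d\<bar> \<le> 1 / \<bar>d\<bar>"
    using d0 abs_sin_le_one[of "u*d"] by (simp add: divide_right_mono)
  also have "\<dots> \<le> u / 2" using assms d0
    by (simp add: field_simps)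
  finally have "sin (u * d) / d \<le> u / 2" by (rule abs_le_D1)
  then show ?thesis using d0 by (simp add: wint_def)
qed

definition phiA :: "real set \<Rightarrow> real \<Rightarrow> complex" where
  "phiA A t = (\<Sum>a\<in>A. iexp (t * a)) / card A"

lemma Re_iexp: "Re (iexp x) = cos x" and Im_iexp: "Im (iexp x) = sin x"
  by (simp_all add: Re_exp Im_exp)

lemma Re_phiA: "Re (phiA A t) = (\<Sum>a\<in>A. cos (t * a)) / card A"
  unfolding phiA_def by (simp add: Re_divide_of_nat Re_sum Re_exp)

lemma Im_phiA: "Im (phiA A t) = (\<Sum>a\<in>A. sin (t * a)) / card A"
  unfolding phiA_def by (simp add: Im_divide_of_nat Im_sum Im_exp)

lemma cmod_phiA_sq:
  "cmod (phiA A t) ^ 2 = (\<Sum>p\<in>A \<times> A. cos (t * (fst p - snd p))) / card A ^ 2"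
proof -
  have "cmod (phiA A t) ^ 2 = Re (phiA A t) ^ 2 + Im (phiA A t) ^ 2"
    by (simp add: cmod_power2)
  also have "\<dots> = ((\<Sum>a\<in>A. cos (t * a)) * (\<Sum>a\<in>A. cos (t * a)) + (\<Sum>a\<in>A. sin (t * a)) * (\<Sum>a\<in>A. sin (t * a))) / card A ^ 2"
    by (simp add: Re_phiA Im_phiA power2_eq_square add_divide_distrib)
  also have "(\<Sum>a\<in>A. cos (t * a)) * (\<Sum>a\<in>A. cos (t * a)) + (\<Sum>a\<in>A. sin (t * a)) * (\<Sum>a\<in>A. sin (t * a))
      = (\<Sum>p\<in>A \<times> A. cos (t * (fst p - snd p)))"
    by (simp add: sum_product sum.cartesian_product case_prod_beta sum.distrib[symmetric] right_diff_distrib cos_diff)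
  finally show ?thesis .
qed

lemma cos_double_bound: "1 - cos (2 * x) \<le> 4 * (1 - cos (x::real))"
proof -
  have "1 - cos (2 * x) = 2 * (1 - cos x) * (1 + cos x)"
    by (subst cos_double_cos) (simp add: algebra_simps power2_eq_square)
  also have "\<dots> \<le> 2 * (1 - cos x) * 2"
    by (intro mult_left_mono) auto
  finally show ?thesis by simp
qed

lemma phiA_sq_double:
  assumes "finite A" "A \<noteq> {}"
  shows "1 - cmod (phiA A (2 * t)) ^ 2 \<le> 4 * (1 - cmod (phiA A t) ^ 2)"
proof -
  have c: "card A > 0" using assms by (simp add: card_gt_0_iff)
  have cc: "real (card (A \<times> A)) = real (card A) ^ 2" by (simp add: card_cartesian_product power2_eq_square)
  have e: "1 - cmod (phiA A s) ^ 2 = (\<Sum>p\<in>A \<times> A. 1 - cos (s * (fst p - snd p))) / card A ^ 2" for s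
    using c by (simp add: cmod_phiA_sq sum_subtractf cc field_simps)
  have "(\<Sum>p\<in>A \<times> A. 1 - cos (2 * t * (fst p - snd p))) \<le> 4 * (\<Sum>p\<in>A \<times> A. (1 - cos (t * (fst p - snd p))))"
    unfolding sum_distrib_left by (intro sum_mono) (use cos_double_bound in \<open>simp add: mult.assoc\<close>)
  hence "(\<Sum>p\<in>A \<times> A. 1 - cos (2 * t * (fst p - snd p))) / card A ^ 2 \<le> 4 * (\<Sum>p\<in>A \<times> A. (1 - cos (t * (fst p - snd p)))) / card A ^ 2"
    by (rule divide_right_mono) simp
  then show ?thesis unfolding e by simp
qed

lemma phiA_Re_double:
  assumes "finite A" "A \<noteq> {}"
  shows "1 - Re (phiA A (2 * t)) \<le> 4 * (1 - Re (phiA A t))"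
proof -
  have c: "card A > 0" using assms by (simp add: card_gt_0_iff)
  have e: "1 - Re (phiA A s) = (\<Sum>a\<in>A. 1 - cos (s * a)) / card A" for s
    using c by (simp add: Re_phiA sum_subtractf field_simps)
  have "(\<Sum>a\<in>A. 1 - cos (2 * t * a)) \<le> 4 * (\<Sum>a\<in>A. (1 - cos (t * a)))"
    unfolding sum_distrib_left by (intro sum_mono) (use cos_double_bound in \<open>simp add: mult.assoc\<close>)
  hence "(\<Sum>a\<in>A. 1 - cos (2 * t * a)) / card A \<le> 4 * (\<Sum>a\<in>A. (1 - cos (t * a))) / card A"
    by (rule divide_right_mono) simp
  then show ?thesis unfolding e by simp
qed

lemma phiA_sq_integral:
  assumes "finite A" "A \<noteq> {}" "u \<ge> 0"
  shows "((\<lambda>t. 1 - cmod (phiA A t) ^ 2) has_integral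
           (\<Sum>p\<in>A \<times> A. wint u (fst p - snd p)) / card A ^ 2) {0..u}"
proof -
  have c: "card A > 0" using assms by (simp add: card_gt_0_iff)
  have cc: "real (card (A \<times> A)) = real (card A) ^ 2" by (simp add: card_cartesian_product power2_eq_square)
  have e: "1 - cmod (phiA A s) ^ 2 = (\<Sum>p\<in>A \<times> A. 1 - cos (s * (fst p - snd p))) / card A ^ 2" for s
    using c by (simp add: cmod_phiA_sq sum_subtractf cc field_simps)
  show ?thesis unfolding e
    by (intro has_integral_divide has_integral_sum wint_has_integral assms finite_cartesian_product)
qed

lemma phiA_Re_integral:
  assumes "finite A" "A \<noteq> {}" "u \<ge> 0"
  shows "((\<lambda>t. 1 - Re (phiA A t)) has_integral (\<Sum>a\<in>A. wint u a) / card A) {0..u}"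
proof -
  have c: "card A > 0" using assms by (simp add: card_gt_0_iff)
  have e: "1 - Re (phiA A s) = (\<Sum>a\<in>A. 1 - cos (s * a)) / card A" for s
    using c by (simp add: Re_phiA sum_subtractf field_simps)
  show ?thesis unfolding e
    by (intro has_integral_divide has_integral_sum wint_has_integral assms)
qed



lemma prod_sum_bound:
  fixes a :: "nat \<Rightarrow> real"
  assumes "\<And>k. k < n \<Longrightarrow> 0 \<le> a k \<and> a k \<le> 1"
  shows "(\<Prod>k<n. 1 - a k) * (1 + (\<Sum>k<n. a k)) \<le> 1 \<and> 0 \<le> (\<Prod>k<n. 1 - a k) \<and> (\<Prod>k<n. 1 - a k) \<le> 1"
  using assms
proof (induction n)
  case 0 then show ?case by simp
next
  case (Suc n)
  define P where "P = (\<Prod>k<n. 1 - a k)"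
  define S where "S = (\<Sum>k<n. a k)"
  have IH: "P * (1 + S) \<le> 1" "0 \<le> P" "P \<le> 1" using Suc by (auto simp: P_def S_def)
  have an: "0 \<le> a n" "a n \<le> 1" using Suc.prems[of n] by auto
  have "(1 - a n) * P * (1 + S + a n) = (1 - a n) * (P * (1 + S)) + (1 - a n) * a n * P"
    by (simp add: algebra_simps)
  also have "\<dots> \<le> (1 - a n) * 1 + (1 - a n) * a n * 1"
    using IH an by (intro add_mono mult_left_mono) auto
  also have "\<dots> = 1 - a n * a n" by (simp add: algebra_simps)
  also have "\<dots> \<le> 1" using an by simp
  finally have 1: "(1 - a n) * P * (1 + S + a n) \<le> 1" .
  have 2: "0 \<le> (1 - a n) * P" using IH an by simp
  have 3: "(1 - a n) * P \<le> 1" using IH an by (simp add: mult_le_one)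
  show ?case using 1 2 3 by (simp add: P_def S_def algebra_simps)
qed

lemma part2:
  fixes N :: "nat \<Rightarrow> nat" and B :: "nat \<Rightarrow> real set" and r0 :: real
  assumes hN: "\<And>n. n \<ge> 1 \<Longrightarrow> N n > 0"
      and hB: "\<And>n. n \<ge> 1 \<Longrightarrow> finite (B n) \<and> card (B n) \<ge> 2"
      and r0: "r0 > 0"
      and mu: "real_distribution \<mu>" and wc: "weak_conv_m (mu_seq N B) \<mu>"
  shows "summable (\<lambda>n. real (card {b \<in> B (Suc n). \<bar>b\<bar> > prodN N (Suc n) * r0}) / real (card (B (Suc n))))"
proof -
  define A where "A k = (\<lambda>b. b / prodN N (Suc k)) ` B (Suc k)" for k
  define Dk where "Dk k = delta_set (A k)" for k
  have finB: "finite (B (Suc k))" and c2: "card (B (Suc k)) \<ge> 2" for k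
    using hB[of "Suc k"] by auto
  have P0: "prodN N k > 0" for k by (rule prodN_pos[OF hN])
  have injA: "inj_on (\<lambda>b. b / prodN N (Suc k)) X" for k X
    using P0[of "Suc k"] by (auto simp: inj_on_def)
  have finA: "finite (A k)" for k unfolding A_def using finB by simp
  have cardA: "card (A k) = card (B (Suc k))" for k unfolding A_def by (rule card_image[OF injA])
  have neA: "A k \<noteq> {}" for k using cardA[of k] c2[of k] by auto
  have cA0: "card (A k) > 0" for k using cardA[of k] c2[of k] by simp
  have rd: "real_distribution (Dk k)" for k
    unfolding Dk_def by (rule delta_set_real_distribution[OF finA neA])
  interpret conv_seq Dk "mu_seq N B"
    by (intro conv_seq.intro rd) (simp_all add: Dk_def A_def)
  have phiD: "char (Dk k) t = phiA (A k) t" for k t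
    unfolding Dk_def phiA_def by (rule char_delta_set[OF finA])
  have phi_le1: "cmod (phiA (A k) t) \<le> 1" for k t
    using char_D_le1[of k t] by (simp add: phiD)
  define F where "F n t = char (mu_seq N B n) t" for n t
  interpret M: real_distribution \<mu> by (rule mu)
  have Fconv: "(\<lambda>n. F n t) \<longlonglongrightarrow> char \<mu> t" for t
    unfolding F_def by (rule levy_continuity1[OF mu_rd mu wc])
  have FSuc: "F (Suc n) t = F n t * phiA (A n) t" for n t
  proof -
    have "char (mu_seq N B (Suc n)) t = char (mu_seq N B n) t * char (Dk n) t"
      by (simp only: muS char_conv[OF mu_rd rd])
    then show ?thesis unfolding F_def by (simp add: phiD)
  qed
  obtain \<delta> where \<delta>: "\<delta> > 0" "\<And>t. \<bar>t\<bar> < \<delta> \<Longrightarrow> cmod (char \<mu> t - 1) < 1/2"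
  proof -
    from M.isCont_char[of 0] obtain e where "e > 0" "\<forall>x. dist x 0 < e \<longrightarrow> dist (char \<mu> x) (char \<mu> 0) < 1/2"
      unfolding continuous_at_eps_delta by (meson half_gt_zero zero_less_one)
    then show ?thesis using that[of e] by (auto simp: dist_norm M.char_zero)
  qed
  define d where "d = \<delta> / 2"
  have d0: "d > 0" using \<delta> by (simp add: d_def)
  have limbig: "cmod (char \<mu> t) \<ge> 1/2" if "\<bar>t\<bar> \<le> d" for t
  proof -
    have "cmod (char \<mu> t - 1) < 1/2" using \<delta>(2)[of t] that \<delta>(1) by (simp add: d_def)
    moreover have "1 \<le> cmod (char \<mu> t) + cmod (char \<mu> t - 1)"
      using norm_triangle_ineq4[of "char \<mu> t" "char \<mu> t - 1"] by simp
    ultimately show ?thesis by linarith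
  qed
  have Fbig: "cmod (F n t) \<ge> 1/2" if "\<bar>t\<bar> \<le> d" for n t
  proof -
    have "decseq (\<lambda>n. cmod (F n t))"
    proof (rule decseq_SucI)
      fix n
      have "cmod (F (Suc n) t) = cmod (F n t) * cmod (phiA (A n) t)" by (simp add: FSuc norm_mult)
      also have "\<dots> \<le> cmod (F n t) * 1" by (intro mult_left_mono phi_le1) auto
      finally show "cmod (F (Suc n) t) \<le> cmod (F n t)" by simp
    qed
    moreover have "(\<lambda>n. cmod (F n t)) \<longlonglongrightarrow> cmod (char \<mu> t)" by (intro tendsto_norm Fconv)
    ultimately have "cmod (char \<mu> t) \<le> cmod (F n t)" by (rule decseq_ge)
    with limbig[OF that] show ?thesis by linarith
  qed
  \<comment> \<open>the symmetrised quantities\<close>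
  define a where "a k t = 1 - cmod (phiA (A k) t) ^ 2" for k t
  have a01: "0 \<le> a k t \<and> a k t \<le> 1" for k t
    using phi_le1[of k t] by (simp add: a_def power_le_one abs_square_le_1)
  have Fprod: "cmod (F n t) ^ 2 = (\<Prod>k<n. 1 - a k t)" for n t
  proof (induction n)
    case 0 then show ?case by (simp add: F_def char_return0)
  next
    case (Suc n)
    have "cmod (F (Suc n) t) ^ 2 = cmod (F n t) ^ 2 * (1 - a n t)"
      by (simp add: FSuc norm_mult power_mult_distrib a_def)
    then show ?case using Suc by simp
  qed
  have sum_a_small: "(\<Sum>k<n. a k t) \<le> 3" if "\<bar>t\<bar> \<le> d" for n t
  proof -
    have pb: "(\<Prod>k<n. 1 - a k t) * (1 + (\<Sum>k<n. a k t)) \<le> 1"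
      using prod_sum_bound[of n "\<lambda>k. a k t"] a01 by blast
    have "(1/2)^2 \<le> cmod (F n t) ^ 2" using Fbig[OF that, of n] by (intro power_mono) auto
    hence "1/4 \<le> (\<Prod>k<n. 1 - a k t)" by (simp only: Fprod) (simp add: power2_eq_square)
    moreover have "0 \<le> 1 + (\<Sum>k<n. a k t)" using a01 by (simp add: sum_nonneg add_nonneg_nonneg)
    ultimately have "1/4 * (1 + (\<Sum>k<n. a k t)) \<le> 1"
      using pb by (meson mult_right_mono order_trans)
    then show ?thesis by simp
  qed
  have sum_a_bound: "\<And>t n. \<bar>t\<bar> \<le> 2^m * d \<Longrightarrow> (\<Sum>k<n. a k t) \<le> 3 * 4^m" for m
  proof (induction m)
    case 0 then show ?case using sum_a_small by simp
  next
    case (Suc m)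
    have "\<bar>t/2\<bar> \<le> 2^m * d" using Suc.prems by simp
    hence "(\<Sum>k<n. a k (t/2)) \<le> 3 * 4^m" by (rule Suc.IH)
    moreover have "(\<Sum>k<n. a k t) \<le> 4 * (\<Sum>k<n. a k (t/2))"
      unfolding sum_distrib_left
    proof (intro sum_mono)
      fix k show "a k t \<le> 4 * a k (t/2)"
        using phiA_sq_double[OF finA neA, of k "t/2"] by (simp add: a_def)
    qed
    ultimately show ?case by simp
  qed
  define u where "u = 4 / r0"
  have u0: "u > 0" using r0 by (simp add: u_def)
  have u2: "2 / u = r0 / 2" using r0 by (simp add: u_def)
  obtain m :: nat where m: "u / d < 2 ^ m" using real_arch_pow[of 2 "u/d"] by auto
  have um: "u \<le> 2^m * d" using m d0 by (simp add: field_simps)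
  define C :: real where "C = 3 * 4^m"
  define Pr where "Pr k = card {p \<in> A k \<times> A k. r0/2 \<le> \<bar>fst p - snd p\<bar>}" for k
  have Pr_bound: "(\<Sum>k<n. Pr k / card (A k)^2) \<le> 2 * C" for n
  proof -
    define I where "I k = (\<Sum>p\<in>A k \<times> A k. wint u (fst p - snd p)) / card (A k) ^ 2" for k
    have hi: "((\<lambda>t. \<Sum>k<n. a k t) has_integral (\<Sum>k<n. I k)) {0..u}"
      unfolding a_def I_def using u0 by (intro has_integral_sum phiA_sq_integral finA neA) auto
    have "(\<Sum>k<n. I k) \<le> Henstock_Kurzweil_Integration.content {0..u} *\<^sub>R C"
    proof (rule has_integral_le[OF hi has_integral_const_real])
      fix t assume "t \<in> {0..u}"
      hence "\<bar>t\<bar> \<le> 2^m * d" using um by auto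
      then show "(\<Sum>k<n. a k t) \<le> C" unfolding C_def by (rule sum_a_bound)
    qed
    hence IC: "(\<Sum>k<n. I k) \<le> u * C" using u0 by simp
    have Ik: "u / 2 * (Pr k / card (A k)^2) \<le> I k" for k
    proof -
      define S where "S = {p \<in> A k \<times> A k. r0/2 \<le> \<bar>fst p - snd p\<bar>}"
      have "u / 2 * Pr k = (\<Sum>p\<in>S. u / 2)" unfolding Pr_def S_def by simp
      also have "\<dots> \<le> (\<Sum>p\<in>S. wint u (fst p - snd p))"
        by (intro sum_mono wint_big u0) (auto simp: S_def u2)
      also have "\<dots> \<le> (\<Sum>p\<in>A k \<times> A k. wint u (fst p - snd p))"
        by (intro sum_mono2 wint_nonneg finite_cartesian_product finA) (use u0 in \<open>auto simp: S_def\<close>)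
      finally have "u / 2 * Pr k \<le> (\<Sum>p\<in>A k \<times> A k. wint u (fst p - snd p))" .
      then have "u / 2 * Pr k / card (A k)^2 \<le> (\<Sum>p\<in>A k \<times> A k. wint u (fst p - snd p)) / card (A k)^2"
        by (rule divide_right_mono) simp
      then show ?thesis unfolding I_def by simp
    qed
    have "u / 2 * (\<Sum>k<n. Pr k / card (A k)^2) \<le> (\<Sum>k<n. I k)"
      unfolding sum_distrib_left by (intro sum_mono Ik)
    with IC have "u / 2 * (\<Sum>k<n. Pr k / card (A k)^2) \<le> u * C" by linarith
    then show ?thesis using u0 by (simp add: field_simps)
  qed
  have sumPr: "summable (\<lambda>k. Pr k / card (A k)^2)"
    by (rule summableI_nonneg_bounded[where x="2*C"]) (use Pr_bound in auto)
  define h where "h k t = 1 - Re (phiA (A k) t)" for k t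
  have h02: "0 \<le> h k t \<and> h k t \<le> 2" for k t
  proof -
    have "Re (phiA (A k) t) \<le> 1" using complex_Re_le_cmod[of "phiA (A k) t"] phi_le1[of k t] by linarith
    moreover have "- Re (phiA (A k) t) \<le> 1" using abs_Re_le_cmod[of "phiA (A k) t"] phi_le1[of k t] by linarith
    ultimately show ?thesis by (simp add: h_def)
  qed
  have h_small: "(\<lambda>k. h k t) \<longlonglongrightarrow> 0" if "\<bar>t\<bar> \<le> d" for t
  proof -
    have ne: "char \<mu> t \<noteq> 0" using limbig[OF that] by auto
    have "(\<lambda>k. F (Suc k) t / F k t) \<longlonglongrightarrow> char \<mu> t / char \<mu> t"
      by (intro tendsto_divide ne Fconv LIMSEQ_Suc)
    moreover have "F (Suc k) t / F k t = phiA (A k) t" for k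
    proof -
      have "F k t \<noteq> 0" using Fbig[OF that, of k] by auto
      then show ?thesis by (simp add: FSuc)
    qed
    ultimately have "(\<lambda>k. phiA (A k) t) \<longlonglongrightarrow> 1" using ne by simp
    hence "(\<lambda>k. 1 - Re (phiA (A k) t)) \<longlonglongrightarrow> 1 - Re 1" by (intro tendsto_intros)
    then show ?thesis by (simp add: h_def)
  qed
  have h_pow: "\<And>t. \<bar>t\<bar> \<le> 2^m' * d \<Longrightarrow> (\<lambda>k. h k t) \<longlonglongrightarrow> 0" for m'
  proof (induction m')
    case 0 then show ?case using h_small by simp
  next
    case (Suc m')
    have "\<bar>t/2\<bar> \<le> 2^m' * d" using Suc.prems by simp
    hence lim: "(\<lambda>k. h k (t/2)) \<longlonglongrightarrow> 0" by (rule Suc.IH)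
    show ?case
    proof (rule tendsto_sandwich[where f="\<lambda>k. 0" and h="\<lambda>k. 4 * h k (t/2)"])
      show "\<forall>\<^sub>F k in sequentially. 0 \<le> h k t" using h02 by simp
      show "\<forall>\<^sub>F k in sequentially. h k t \<le> 4 * h k (t/2)"
      proof (intro always_eventually allI)
        fix k show "h k t \<le> 4 * h k (t/2)"
          using phiA_Re_double[OF finA neA, of k "t/2"] by (simp add: h_def)
      qed
      show "(\<lambda>k. 4 * h k (t/2)) \<longlonglongrightarrow> 0" using tendsto_mult_right_zero[OF lim, of 4] by simp
    qed simp
  qed
  have h_all: "(\<lambda>k. h k t) \<longlonglongrightarrow> 0" for t
  proof -
    obtain m' :: nat where "\<bar>t\<bar> / d < 2 ^ m'" using real_arch_pow[of 2 "\<bar>t\<bar>/d"] by auto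
    hence "\<bar>t\<bar> \<le> 2^m' * d" using d0 by (simp add: field_simps)
    then show ?thesis by (rule h_pow)
  qed
  define J where "J k = (\<Sum>a\<in>A k. wint u a) / card (A k)" for k
  have hint: "(h k has_integral J k) {0..u}" for k
    unfolding h_def J_def using u0 by (intro phiA_Re_integral finA neA) auto
  have Jlim: "J \<longlonglongrightarrow> 0"
  proof -
    have "(\<lambda>k. integral {0..u} (h k)) \<longlonglongrightarrow> integral {0..u} (\<lambda>t. 0::real)"
    proof (rule dominated_convergence(2)[where h="\<lambda>t. 2"])
      show "h k integrable_on {0..u}" for k using hint by blast
      show "(\<lambda>t. 2::real) integrable_on {0..u}" by blast
      show "norm (h k t) \<le> 2" for k t using h02[of k t] by simp
      show "(\<lambda>k. h k t) \<longlonglongrightarrow> 0" for t by (rule h_all)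
    qed
    moreover have "integral {0..u} (h k) = J k" for k using hint by blast
    ultimately show ?thesis by simp
  qed
  define Q where "Q k = card {a \<in> A k. r0/2 \<le> \<bar>a\<bar>} / card (A k)" for k
  have QJ: "0 \<le> Q k \<and> Q k \<le> 2 / u * J k" for k
  proof -
    define S where "S = {a \<in> A k. r0/2 \<le> \<bar>a\<bar>}"
    have "u / 2 * card S = (\<Sum>a\<in>S. u / 2)" by simp
    also have "\<dots> \<le> (\<Sum>a\<in>S. wint u a)"
      by (intro sum_mono wint_big u0) (auto simp: S_def u2)
    also have "\<dots> \<le> (\<Sum>a\<in>A k. wint u a)"
      by (intro sum_mono2 wint_nonneg finA) (use u0 in \<open>auto simp: S_def\<close>)
    finally have "u / 2 * card S \<le> (\<Sum>a\<in>A k. wint u a)" .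
    hence "u / 2 * card S / card (A k) \<le> (\<Sum>a\<in>A k. wint u a) / card (A k)"
      by (rule divide_right_mono) simp
    hence "u / 2 * Q k \<le> J k"
      unfolding Q_def J_def S_def[symmetric] by simp
    then show ?thesis using u0 by (simp add: Q_def field_simps)
  qed
  have Qlim: "Q \<longlonglongrightarrow> 0"
  proof (rule tendsto_sandwich[where f="\<lambda>k. 0" and h="\<lambda>k. 2 / u * J k"])
    show "\<forall>\<^sub>F k in sequentially. 0 \<le> Q k" using QJ by simp
    show "\<forall>\<^sub>F k in sequentially. Q k \<le> 2 / u * J k" using QJ by simp
    show "(\<lambda>k. 2 / u * J k) \<longlonglongrightarrow> 0" using tendsto_mult_right_zero[OF Jlim, of "2/u"] by simp
  qed simp
  obtain K where K: "\<And>k. k \<ge> K \<Longrightarrow> Q k < 1/2"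
  proof -
    obtain K where "\<forall>k\<ge>K. norm (Q k - 0) < 1/2"
      using LIMSEQ_D[OF Qlim, of "1/2"] by auto
    then show ?thesis using that QJ by (metis abs_of_nonneg diff_zero real_norm_def)
  qed
  \<comment> \<open>desymmetrisation\<close>
  define R where "R k = card {a \<in> A k. r0 < \<bar>a\<bar>}" for k
  have RPr: "R k / card (A k) \<le> 2 * (Pr k / card (A k)^2)" if "k \<ge> K" for k
  proof -
    define S where "S = {a \<in> A k. r0/2 \<le> \<bar>a\<bar>}"
    define L where "L = {a \<in> A k. \<bar>a\<bar> < r0/2}"
    have LS: "L = A k - S" by (auto simp: L_def S_def)
    have "card L = card (A k) - card S"
      unfolding LS by (rule card_Diff_subset) (use finA in \<open>auto simp: S_def\<close>)
    moreover have "card S \<le> card (A k)" using finA by (intro card_mono) (auto simp: S_def)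
    ultimately have cL: "real (card L) = card (A k) - real (card S)" by simp
    have "real (card S) < card (A k) / 2"
      using K[OF that] cA0[of k] unfolding Q_def S_def[symmetric] by (simp add: field_simps)
    hence Lbig: "real (card (A k)) / 2 \<le> card L" using cL by linarith
    have "{a \<in> A k. r0 < \<bar>a\<bar>} \<times> L \<subseteq> {p \<in> A k \<times> A k. r0/2 \<le> \<bar>fst p - snd p\<bar>}"
      by (auto simp: L_def abs_diff_le_iff) (smt (verit) abs_triangle_ineq4)
    hence "card ({a \<in> A k. r0 < \<bar>a\<bar>} \<times> L) \<le> Pr k"
      unfolding Pr_def using finA by (intro card_mono) auto
    hence RL: "real (R k) * card L \<le> Pr k"
      unfolding R_def card_cartesian_product by (metis of_nat_le_iff of_nat_mult)
    have "real (R k) * (card (A k) / 2) \<le> real (R k) * card L"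
      using Lbig by (intro mult_left_mono) auto
    with RL have "real (R k) * (card (A k) / 2) \<le> Pr k" by linarith
    then show ?thesis using cA0[of k] by (simp add: field_simps power2_eq_square)
  qed
  have sumR: "summable (\<lambda>k. R k / card (A k))"
  proof (rule summable_comparison_test'[where N=K])
    show "summable (\<lambda>k. 2 * (Pr k / card (A k)^2))" using sumPr by (rule summable_mult)
    show "norm (R k / card (A k)) \<le> 2 * (Pr k / card (A k)^2)" if "k \<ge> K" for k
      using RPr[OF that] by simp
  qed
  have "R k / card (A k) = real (card {b \<in> B (Suc k). \<bar>b\<bar> > prodN N (Suc k) * r0}) / real (card (B (Suc k)))" for k
  proof -
    have "{a \<in> A k. r0 < \<bar>a\<bar>} = (\<lambda>b. b / prodN N (Suc k)) ` {b \<in> B (Suc k). \<bar>b\<bar> > prodN N (Suc k) * r0}"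
    proof -
      have key: "(r0 < \<bar>b / prodN N (Suc k)\<bar>) = (prodN N (Suc k) * r0 < \<bar>b\<bar>)" for b
        using P0[of "Suc k"] by (simp add: pos_less_divide_eq mult.commute)
      have g: "{a \<in> f ` S. Qp a} = f ` {b \<in> S. Qp (f b)}" for f :: "real \<Rightarrow> real" and S Qp by auto
      have eqset: "{b \<in> B (Suc k). r0 < \<bar>b / prodN N (Suc k)\<bar>} = {b \<in> B (Suc k). prodN N (Suc k) * r0 < \<bar>b\<bar>}"
        using key by blast
      show ?thesis unfolding A_def by (subst g) (simp only: eqset)
    qed
    hence "R k = card {b \<in> B (Suc k). \<bar>b\<bar> > prodN N (Suc k) * r0}"
      unfolding R_def by (simp add: card_image[OF injA])
    then show ?thesis by (simp add: cardA)
  qed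
  with sumR show ?thesis by simp
qed


theorem theorem2p1:
  fixes N :: "nat \<Rightarrow> nat" and B :: "nat \<Rightarrow> real set"
  assumes hN: "\<And>n. n \<ge> 1 \<Longrightarrow> N n > 0"
      and hB: "\<And>n. n \<ge> 1 \<Longrightarrow> finite (B n) \<and> card (B n) \<ge> 2"
  shows "((summable (\<lambda>n. real (card (Bn2 N B (Suc n))) / real (card (B (Suc n))))
          \<or> summable (\<lambda>n. Max (abs ` B (Suc n)) / prodN N (Suc n)))
          \<longrightarrow> inf_conv_exists N B)
       \<and> ((\<exists>r0>0. \<not> summable (\<lambda>n. real (card {b \<in> B (Suc n). \<bar>b\<bar> > prodN N (Suc n) * r0})
                                     / real (card (B (Suc n)))))
          \<longrightarrow> \<not> inf_conv_exists N B)"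
proof (intro conjI impI)
  assume "summable (\<lambda>n. real (card (Bn2 N B (Suc n))) / real (card (B (Suc n))))
          \<or> summable (\<lambda>n. Max (abs ` B (Suc n)) / prodN N (Suc n))"
  then show "inf_conv_exists N B" using part1[of N B] hN hB by blast
next
  assume "\<exists>r0>0. \<not> summable (\<lambda>n. real (card {b \<in> B (Suc n). \<bar>b\<bar> > prodN N (Suc n) * r0})
                                     / real (card (B (Suc n))))"
  then obtain r0 where r0: "r0 > 0" and ns: "\<not> summable (\<lambda>n. real (card {b \<in> B (Suc n). \<bar>b\<bar> > prodN N (Suc n) * r0})
                                     / real (card (B (Suc n))))" by blast
  show "\<not> inf_conv_exists N B"
  proof
    assume "inf_conv_exists N B"
    then obtain \<mu> where "real_distribution \<mu>" "weak_conv_m (mu_seq N B) \<mu>"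
      unfolding inf_conv_exists_def by blast
    from part2[OF hN hB r0 this] ns show False by blast
  qed
qed

end
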